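(* Consider the quantized sensor-network model described in the context, and assume all attacks are estimable, i.e. $\mathbf{J}_{\boldsymbol\tau^{(p)}}$ is nonsingular for every $p=1,\dots,P$; assume also that $\mathbf{J}_{\mathcal{A}_0}$ and $\mathbf{J}_{\boldsymbol\Theta}$ are nonsingular. Then the Cramér–Rao bound for $\boldsymbol\theta$ satisfies $$\big[\mathbf{J}_{\boldsymbol\Theta}^{-1}\big]_{1:D_{\boldsymbol\theta}}\preceq \mathbf{J}_{\mathcal{A}_0}^{-1}$$ in the positive semidefinite order, and equality holds if and only if for every $p=1,\dots,P$, $$\mathscr{R}\big(\mathbf{V}_{\boldsymbol\theta^{(p)}}\boldsymbol\Lambda_{\boldsymbol\theta^{(p)}}^T\big)\subseteq\mathscr{R}\big(\mathbf{V}_{\boldsymbol\tau^{(p)}}\boldsymbol\Lambda_{\boldsymbol\tau^{(p)}}^T\big).$$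
   Context: Sensors are indexed by $j\in\{1,\dots,N\}$. Sensor $j$ acquires $K_j$ scalar measurements $\tilde x_{jk}$, $k=1,\dots,K_j$, each quantized by an $R_j$-level quantizer with fixed disjoint regions $I_j^{(1)},\dots,I_j^{(R_j)}$ partitioning $\mathbb{R}$, producing $\tilde u_{jk}=\sum_{r=1}^{R_j} r\,\mathbb{1}\{\tilde x_{jk}\in I_j^{(r)}\}$. The sensor set is partitioned into disjoint sets $\mathcal{A}_0$ (unattacked) and $\mathcal{A}_1,\dots,\mathcal{A}_P$ (attacked, grouped by attack). Unknown deterministic parameters: $\boldsymbol\theta\in\mathbb{R}^{D_{\boldsymbol\theta}}$ and $\boldsymbol\tau^{(p)}\in\mathbb{R}^{D_p}$, $p=1,\dots,P$. The $\{\tilde x_{jk}\}$ are independent; $\tilde x_{jk}$ has pdf $f_{jk}(\cdot\mid\boldsymbol\theta)$ if $j\in\mathcal{A}_0$ and $g_{jk}(\cdot\mid\boldsymbol\theta,\boldsymbol\tau^{(p)})$ if $j\in\mathcal{A}_p$, $p\ge1$. Let $p_{jr}^{(k)}=\Pr(\tilde u_{jk}=r)$ (the integral of the corresponding pdf over $I_j^{(r)}$), assumed positive and differentiable in the parameters. Let $\boldsymbol\Theta=[\boldsymbol\theta^T,(\boldsymbol\tau^{(1)})^T,\dots,(\boldsymbol\tau^{(P)})^T]^T$ and $\mathbf{J}_{\boldsymbol\Theta}=\sum_{j=1}^N\sum_{k=1}^{K_j}\sum_{r=1}^{R_j}\frac{1}{p_{jr}^{(k)}}\frac{\partial p_{jr}^{(k)}}{\partial\boldsymbol\Theta}\big[\frac{\partial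 p_{jr}^{(k)}}{\partial\boldsymbol\Theta}\big]^T$ (the Fisher information matrix of the quantized data). For $p\ge0$, $\mathbf{J}_{\mathcal{A}_p}=\sum_{j\in\mathcal{A}_p}\sum_{k}\sum_{r}\frac{1}{p_{jr}^{(k)}}\frac{\partial p_{jr}^{(k)}}{\partial\boldsymbol\theta}\big[\frac{\partial p_{jr}^{(k)}}{\partial\boldsymbol\theta}\big]^T$, and for $p\ge1$, $\mathbf{J}_{\boldsymbol\tau^{(p)}}=\sum_{j\in\mathcal{A}_p}\sum_{k}\sum_{r}\frac{1}{p_{jr}^{(k)}}\frac{\partial p_{jr}^{(k)}}{\partial\boldsymbol\tau^{(p)}}\big[\frac{\partial p_{jr}^{(k)}}{\partial\boldsymbol\tau^{(p)}}\big]^T$. For $p\ge1$, let $M_p=\sum_{j\in\mathcal{A}_p}K_jR_j$ and define $\boldsymbol\Phi_{\boldsymbol\theta^{(p)}}\in\mathbb{R}^{D_{\boldsymbol\theta}\times M_p}$ and $\boldsymbol\Phi_{\boldsymbol\tau^{(p)}}\in\mathbb{R}^{D_p\times M_p}$ as the matrices whose columns, indexed by the triples $(j,k,r)$ with $j\in\mathcal{A}_p$, $1\le k\le K_j$, $1\le r\le R_j$ (in the same fixed order for both matrices), are respectively $(p_{jr}^{(k)})^{-1/2}\,\partial p_{jr}^{(k)}/\partial\boldsymbol\theta$ and $(p_{jr}^{(k)})^{-1/2}\,\partial p_{jr}^{(k)}/\partial\boldsymbol\tau^{(p)}$. Let $\boldsymbol\Phi_{\boldsymbol\theta^{(p)}}=\mathbf{U}_{\boldsymbol\theta^{(p)}}\boldsymbol\Lambda_{\boldsymbol\theta^{(p)}}\mathbf{V}_{\boldsymbol\theta^{(p)}}^T$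 and $\boldsymbol\Phi_{\boldsymbol\tau^{(p)}}=\mathbf{U}_{\boldsymbol\tau^{(p)}}\boldsymbol\Lambda_{\boldsymbol\tau^{(p)}}\mathbf{V}_{\boldsymbol\tau^{(p)}}^T$ be singular value decompositions. $\mathscr{R}(\cdot)$ denotes range (column space), $[\mathbf{A}]_{1:D}$ denotes the leading $D\times D$ principal submatrix, and $\preceq$ is the positive semidefinite (Loewner) order. *)

theory Defs
  imports "HOL-Analysis.Set_Integral" "HOL-Analysis.Lebesgue_Measure" "Jordan_Normal_Form.Matrix"
begin

definition vnorm :: "real Matrix.vec \<Rightarrow> real" where
  "vnorm v = sqrt (scalar_prod v v)"

definition has_grad :: "nat \<Rightarrow> (real Matrix.vec \<Rightarrow> real) \<Rightarrow> real Matrix.vec \<Rightarrow> real Matrix.vec \<Rightarrow> bool" where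
  "has_grad n F g x \<longleftrightarrow> g \<in> carrier_vec n \<and>
     (\<forall>e>0. \<exists>d>0. \<forall>h\<in>carrier_vec n. vnorm h < d \<longrightarrow>
        \<bar>F (x + h) - F x - scalar_prod g h\<bar> \<le> e * vnorm h)"

definition differentiable_vec :: "nat \<Rightarrow> (real Matrix.vec \<Rightarrow> real) \<Rightarrow> real Matrix.vec \<Rightarrow> bool" where
  "differentiable_vec n F x \<longleftrightarrow> (\<exists>g. has_grad n F g x)"

definition grad :: "nat \<Rightarrow> (real Matrix.vec \<Rightarrow> real) \<Rightarrow> real Matrix.vec \<Rightarrow> real Matrix.vec" where
  "grad n F x = (SOME g. has_grad n F g x)"

section \<open>Parameter layout  Theta = [theta; tau^(1); ...; tau^(P)]\<close>

definition tot_dim :: "nat \<Rightarrow> (nat \<Rightarrow> nat) \<Rightarrow> nat \<Rightarrow> nat" where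
  "tot_dim Dth D P = Dth + (\<Sum>p\<in>{1..P}. D p)"

text \<open>0-based offset of the block tau^(p) inside Theta\<close>
definition par_off :: "nat \<Rightarrow> (nat \<Rightarrow> nat) \<Rightarrow> nat \<Rightarrow> nat" where
  "par_off Dth D p = Dth + (\<Sum>q\<in>{1..<p}. D q)"

definition theta_part :: "nat \<Rightarrow> real Matrix.vec \<Rightarrow> real Matrix.vec" where
  "theta_part Dth Th = Matrix.vec Dth (\<lambda>i. Th $ i)"

definition tau_part :: "nat \<Rightarrow> (nat \<Rightarrow> nat) \<Rightarrow> nat \<Rightarrow> real Matrix.vec \<Rightarrow> real Matrix.vec" where
  "tau_part Dth D p Th = Matrix.vec (D p) (\<lambda>i. Th $ (par_off Dth D p + i))"

text \<open>Index of the attack group containing sensor j (0 = unattacked).\<close>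
definition sensor_group :: "(nat \<Rightarrow> nat set) \<Rightarrow> nat \<Rightarrow> nat \<Rightarrow> nat" where
  "sensor_group A P j = (THE p. p \<le> P \<and> j \<in> A p)"

text \<open>p_{jr}^{(k)} as a function of the full parameter vector Theta:
  integral of f_{jk}(.|theta) (unattacked) resp. g_{jk}(.|theta,tau^(p)) (attacked, j in A_p)
  over the quantization region I_j^{(r)}.\<close>
definition qprob :: "nat \<Rightarrow> (nat \<Rightarrow> nat) \<Rightarrow> (nat \<Rightarrow> nat set) \<Rightarrow> nat \<Rightarrow> (nat \<Rightarrow> nat \<Rightarrow> real set)
    \<Rightarrow> (nat \<Rightarrow> nat \<Rightarrow> real \<Rightarrow> real Matrix.vec \<Rightarrow> real)
    \<Rightarrow> (nat \<Rightarrow> nat \<Rightarrow> real \<Rightarrow> real Matrix.vec \<Rightarrow> real Matrix.vec \<Rightarrow> real)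
    \<Rightarrow> nat \<Rightarrow> nat \<Rightarrow> nat \<Rightarrow> real Matrix.vec \<Rightarrow> real" where
  "qprob Dth D A P I f g j k r Th =
     (if j \<in> A 0 then (LINT x:I j r|lborel. f j k x (theta_part Dth Th))
      else (LINT x:I j r|lborel. g j k x (theta_part Dth Th) (tau_part Dth D (sensor_group A P j) Th)))"

text \<open>Thus J_Theta = fisher_block n 0 n Pr {1..N} K R Th, J_{A_p} = fisher_block n 0 Dth Pr (A p) K R Th,
  J_{tau^(p)} = fisher_block n (par_off Dth D p) (D p) Pr (A p) K R Th.\<close>
definition fisher_block :: "nat \<Rightarrow> nat \<Rightarrow> nat \<Rightarrow> (nat \<Rightarrow> nat \<Rightarrow> nat \<Rightarrow> real Matrix.vec \<Rightarrow> real)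
    \<Rightarrow> nat set \<Rightarrow> (nat \<Rightarrow> nat) \<Rightarrow> (nat \<Rightarrow> nat) \<Rightarrow> real Matrix.vec \<Rightarrow> real mat" where
  "fisher_block n off m Pr S K R Th = mat m m (\<lambda>(a,b).
     \<Sum>j\<in>S. \<Sum>k\<in>{1..K j}. \<Sum>r\<in>{1..R j}.
       (grad n (Pr j k r) Th $ (off + a)) * (grad n (Pr j k r) Th $ (off + b)) / Pr j k r Th)"

definition triples :: "nat set \<Rightarrow> (nat \<Rightarrow> nat) \<Rightarrow> (nat \<Rightarrow> nat) \<Rightarrow> (nat \<times> nat \<times> nat) list" where
  "triples S K R = concat (map (\<lambda>j. concat (map (\<lambda>k. map (\<lambda>r. (j,k,r)) [1..<Suc (R j)]) [1..<Suc (K j)]))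
                      (sorted_list_of_set S))"

definition Phi_mat :: "nat \<Rightarrow> nat \<Rightarrow> nat \<Rightarrow> (nat \<Rightarrow> nat \<Rightarrow> nat \<Rightarrow> real Matrix.vec \<Rightarrow> real)
    \<Rightarrow> nat set \<Rightarrow> (nat \<Rightarrow> nat) \<Rightarrow> (nat \<Rightarrow> nat) \<Rightarrow> real Matrix.vec \<Rightarrow> real mat" where
  "Phi_mat n off m Pr S K R Th = mat_of_cols m
     (map (\<lambda>(j,k,r). Matrix.vec m (\<lambda>a. grad n (Pr j k r) Th $ (off + a) / sqrt (Pr j k r Th)))
          (triples S K R))"

definition is_svd :: "real mat \<Rightarrow> real mat \<Rightarrow> real mat \<Rightarrow> real mat \<Rightarrow> bool" where
  "is_svd Ph U L V \<longleftrightarrow> (let d = dim_row Ph; M = dim_col Ph in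
     U \<in> carrier_mat d d \<and> L \<in> carrier_mat d M \<and> V \<in> carrier_mat M M \<and>
     transpose_mat U * U = 1\<^sub>m d \<and> U * transpose_mat U = 1\<^sub>m d \<and>
     transpose_mat V * V = 1\<^sub>m M \<and> V * transpose_mat V = 1\<^sub>m M \<and>
     (\<forall>i<d. \<forall>j<M. i \<noteq> j \<longrightarrow> L $$ (i,j) = 0) \<and>
     (\<forall>i<min d M. 0 \<le> L $$ (i,i)) \<and>
     (\<forall>i j. i \<le> j \<and> j < min d M \<longrightarrow> L $$ (j,j) \<le> L $$ (i,i)) \<and>
     Ph = U * L * transpose_mat V)"

definition mat_range :: "real mat \<Rightarrow> real Matrix.vec set" where
  "mat_range A = {A *\<^sub>v x | x. x \<in> carrier_vec (dim_col A)}"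

definition lead_submat :: "nat \<Rightarrow> real mat \<Rightarrow> real mat" where
  "lead_submat m A = mat m m (\<lambda>(i,j). A $$ (i,j))"

text \<open>Matrix inverse (meaningful for invertible square matrices).\<close>
definition mat_inv :: "real mat \<Rightarrow> real mat" where
  "mat_inv A = (SOME B. inverts_mat A B \<and> inverts_mat B A)"

definition loewner_le :: "real mat \<Rightarrow> real mat \<Rightarrow> bool" where
  "loewner_le A B \<longleftrightarrow> (\<exists>n. A \<in> carrier_mat n n \<and> B \<in> carrier_mat n n \<and>
     transpose_mat A = A \<and> transpose_mat B = B \<and>
     (\<forall>x\<in>carrier_vec n. 0 \<le> scalar_prod x ((B - A) *\<^sub>v x)))"

end

theory Submission
  imports Defs
begin


lemma core_identity:
  fixes w :: "'t \<Rightarrow> nat \<Rightarrow> real"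
  assumes fin: "finite T" and sub: "T0 \<subseteq> T" and Dn: "Dth \<le> n"
    and supp0: "\<forall>t\<in>T0. \<forall>b. Dth \<le> b \<longrightarrow> b < n \<longrightarrow> w t b = 0"
    and sdef: "\<And>t. s t = (\<Sum>b\<in>{0..<n}. w t b * y b)"
    and udef: "\<And>t. u t = (\<Sum>b\<in>{0..<Dth}. w t b * z b)"
    and hy: "\<forall>i<n. (\<Sum>t\<in>T. w t i * s t) = (if i < Dth then x i else 0)"
    and hz: "\<forall>i<Dth. (\<Sum>t\<in>T0. w t i * u t) = x i"
  shows "(\<Sum>i\<in>{0..<Dth}. x i * z i) - (\<Sum>i\<in>{0..<Dth}. x i * y i)
         = (\<Sum>t\<in>T0. (u t - s t)^2) + (\<Sum>t\<in>T-T0. (s t)^2)"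
proof -
  have fin0: "finite T0" using fin sub finite_subset by blast
  have s0: "s t = (\<Sum>b\<in>{0..<Dth}. w t b * y b)" if "t \<in> T0" for t
  proof -
    have "s t = (\<Sum>b\<in>{0..<Dth}. w t b * y b) + (\<Sum>b\<in>{Dth..<n}. w t b * y b)"
      unfolding sdef using Dn sum.atLeastLessThan_concat[of 0 Dth n "\<lambda>b. w t b * y b"] by simp
    moreover have "(\<Sum>b\<in>{Dth..<n}. w t b * y b) = 0" using supp0 that by auto
    ultimately show ?thesis by simp
  qed
  have e1: "(\<Sum>i\<in>{0..<n}. (if i < Dth then x i else 0) * y i) = (\<Sum>t\<in>T. (s t)^2)"
  proof -
    have "(\<Sum>i\<in>{0..<n}. (if i < Dth then x i else 0) * y i)
        = (\<Sum>i\<in>{0..<n}. (\<Sum>t\<in>T. w t i * s t) * y i)" using hy by (intro sum.cong) auto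
    also have "\<dots> = (\<Sum>t\<in>T. s t * (\<Sum>i\<in>{0..<n}. w t i * y i))"
      unfolding sum_distrib_right sum_distrib_left by (subst sum.swap) (simp add: mult_ac)
    also have "\<dots> = (\<Sum>t\<in>T. (s t)^2)" by (simp add: sdef power2_eq_square)
    finally show ?thesis .
  qed
  have e2: "(\<Sum>i\<in>{0..<n}. (if i < Dth then x i else 0) * y i) = (\<Sum>i\<in>{0..<Dth}. x i * y i)"
  proof -
    have "(\<Sum>i\<in>{0..<n}. (if i < Dth then x i else 0) * y i)
       = (\<Sum>i\<in>{0..<Dth}. (if i < Dth then x i else 0) * y i) + (\<Sum>i\<in>{Dth..<n}. (if i < Dth then x i else 0) * y i)"
      using Dn sum.atLeastLessThan_concat[of 0 Dth n "\<lambda>i. (if i < Dth then x i else 0) * y i"] by simp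
    then show ?thesis by simp
  qed
  have e3: "(\<Sum>i\<in>{0..<Dth}. x i * z i) = (\<Sum>t\<in>T0. (u t)^2)"
  proof -
    have "(\<Sum>i\<in>{0..<Dth}. x i * z i) = (\<Sum>i\<in>{0..<Dth}. (\<Sum>t\<in>T0. w t i * u t) * z i)"
      using hz by (intro sum.cong) auto
    also have "\<dots> = (\<Sum>t\<in>T0. u t * (\<Sum>i\<in>{0..<Dth}. w t i * z i))"
      unfolding sum_distrib_right sum_distrib_left by (subst sum.swap) (simp add: mult_ac)
    also have "\<dots> = (\<Sum>t\<in>T0. (u t)^2)" by (simp add: udef power2_eq_square)
    finally show ?thesis .
  qed
  have e4: "(\<Sum>i\<in>{0..<Dth}. x i * y i) = (\<Sum>t\<in>T0. u t * s t)"
  proof -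
    have "(\<Sum>i\<in>{0..<Dth}. x i * y i) = (\<Sum>i\<in>{0..<Dth}. (\<Sum>t\<in>T0. w t i * u t) * y i)"
      using hz by (intro sum.cong) auto
    also have "\<dots> = (\<Sum>t\<in>T0. u t * (\<Sum>i\<in>{0..<Dth}. w t i * y i))"
      unfolding sum_distrib_right sum_distrib_left by (subst sum.swap) (simp add: mult_ac)
    also have "\<dots> = (\<Sum>t\<in>T0. u t * s t)" using s0 by (intro sum.cong) auto
    finally show ?thesis .
  qed
  have split: "(\<Sum>t\<in>T. (s t)^2) = (\<Sum>t\<in>T0. (s t)^2) + (\<Sum>t\<in>T-T0. (s t)^2)"
    using sum.subset_diff[OF sub fin] by (simp add: add.commute)
  have "(\<Sum>t\<in>T0. (u t - s t)^2) = (\<Sum>t\<in>T0. (u t)^2) - 2 * (\<Sum>t\<in>T0. u t * s t) + (\<Sum>t\<in>T0. (s t)^2)"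
    by (simp add: power2_diff sum_subtractf sum.distrib sum_distrib_left mult_ac)
  then show ?thesis using e1 e2 e3 e4 split by linarith
qed


lemma mat_inv_props:
  assumes inv: "invertible_mat A" and A: "A \<in> carrier_mat n n"
  shows "mat_inv A \<in> carrier_mat n n" "A * mat_inv A = 1\<^sub>m n" "mat_inv A * A = 1\<^sub>m n"
proof -
  from inv obtain B where "inverts_mat A B \<and> inverts_mat B A" unfolding invertible_mat_def by blast
  hence "inverts_mat A (mat_inv A) \<and> inverts_mat (mat_inv A) A"
    unfolding mat_inv_def by (rule someI)
  hence h1: "A * mat_inv A = 1\<^sub>m n" and h2: "mat_inv A * A = 1\<^sub>m (dim_row (mat_inv A))"
    unfolding inverts_mat_def using A by auto
  have "dim_col (mat_inv A) = n" using arg_cong[OF h1, of dim_col] by simp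
  moreover have "dim_row (mat_inv A) = n" using arg_cong[OF h2, of dim_col] A by simp
  ultimately show c: "mat_inv A \<in> carrier_mat n n" by auto
  show "A * mat_inv A = 1\<^sub>m n" by fact
  show "mat_inv A * A = 1\<^sub>m n" using h2 c by simp
qed

lemma mat_inv_sym:
  assumes inv: "invertible_mat A" and A: "A \<in> carrier_mat n n" and sym: "transpose_mat A = A"
  shows "transpose_mat (mat_inv A) = mat_inv A"
proof -
  note p = mat_inv_props[OF inv A]
  let ?B = "mat_inv A"
  have "transpose_mat ?B * A = transpose_mat ?B * transpose_mat A" using sym by simp
  also have "\<dots> = transpose_mat (A * ?B)" using transpose_mult[OF A p(1)] by simp
  also have "\<dots> = 1\<^sub>m n" using p(2) by simp
  finally have tb: "transpose_mat ?B * A = 1\<^sub>m n" .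
  have "transpose_mat ?B = transpose_mat ?B * (A * ?B)" using p(1,2) by simp
  also have "\<dots> = (transpose_mat ?B * A) * ?B" using p(1) A
    by (simp add: assoc_mult_mat[of _ n n _ n _ n])
  also have "\<dots> = ?B" using tb p(1) by simp
  finally show ?thesis .
qed

lemma mat_inv_solve:
  assumes inv: "invertible_mat A" and A: "A \<in> carrier_mat n n"
    and y: "y \<in> carrier_vec n" and eq: "A *\<^sub>v y = x"
  shows "mat_inv A *\<^sub>v x = y"
proof -
  note p = mat_inv_props[OF inv A]
  have "mat_inv A *\<^sub>v x = (mat_inv A * A) *\<^sub>v y" using eq p(1) A y by simp
  then show ?thesis using p(3) y by simp
qed

lemma mat_mult_unit: fixes M :: "real mat" assumes "M \<in> carrier_mat n m" "i < n" "j < m"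
  shows "(M *\<^sub>v unit_vec m j) $ i = M $$ (i,j)"
  using assms scalar_prod_right_unit[OF assms(3), of "Matrix.row M i"] by simp

lemma gram_mult:
  fixes w :: "'t \<Rightarrow> nat \<Rightarrow> real"
  assumes "v \<in> carrier_vec n" "i < n"
  shows "(mat n n (\<lambda>(a,b). \<Sum>t\<in>T. w t a * w t b) *\<^sub>v v) $ i
       = (\<Sum>t\<in>T. w t i * (\<Sum>b\<in>{0..<n}. w t b * v $ b))"
proof -
  have "(mat n n (\<lambda>(a,b). \<Sum>t\<in>T. w t a * w t b) *\<^sub>v v) $ i
      = (\<Sum>b\<in>{0..<n}. (\<Sum>t\<in>T. w t i * w t b) * v $ b)"
    using assms by (simp add: scalar_prod_def row_def)
  also have "\<dots> = (\<Sum>t\<in>T. w t i * (\<Sum>b\<in>{0..<n}. w t b * v $ b))"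
    unfolding sum_distrib_right sum_distrib_left by (subst sum.swap) (simp add: mult_ac)
  finally show ?thesis .
qed

lemma lead_mult:
  assumes x: "x \<in> carrier_vec Dth" and Dn: "Dth \<le> n" and M: "M \<in> carrier_mat n n" and i: "i < Dth"
  shows "(lead_submat Dth M *\<^sub>v x) $ i = (M *\<^sub>v vec n (\<lambda>j. if j < Dth then x $ j else 0)) $ i"
proof -
  have "(M *\<^sub>v vec n (\<lambda>j. if j < Dth then x $ j else 0)) $ i
      = (\<Sum>j\<in>{0..<n}. M $$ (i,j) * (if j < Dth then x $ j else 0))"
    using M i Dn by (simp add: scalar_prod_def row_def)
  also have "\<dots> = (\<Sum>j\<in>{0..<Dth}. M $$ (i,j) * (if j < Dth then x $ j else 0))
                 + (\<Sum>j\<in>{Dth..<n}. M $$ (i,j) * (if j < Dth then x $ j else 0))"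
    using Dn sum.atLeastLessThan_concat[of 0 Dth n "\<lambda>j. M $$ (i,j) * (if j < Dth then x $ j else 0)"]
    by simp
  also have "\<dots> = (\<Sum>j\<in>{0..<Dth}. M $$ (i,j) * x $ j)" by simp
  also have "\<dots> = (lead_submat Dth M *\<^sub>v x) $ i"
    using x i by (simp add: lead_submat_def scalar_prod_def row_def)
  finally show ?thesis by simp
qed


definition xt :: "nat \<Rightarrow> nat \<Rightarrow> real Matrix.vec \<Rightarrow> real Matrix.vec" where
  "xt n Dth x = vec n (\<lambda>j. if j < Dth then x $ j else 0)"

locale gram =
  fixes n Dth :: nat and T T0 :: "'t set" and w :: "'t \<Rightarrow> nat \<Rightarrow> real"
  assumes fin: "finite T" and sub: "T0 \<subseteq> T" and Dn: "Dth \<le> n"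
    and supp0: "\<forall>t\<in>T0. \<forall>b. Dth \<le> b \<longrightarrow> b < n \<longrightarrow> w t b = 0"
    and invJ: "invertible_mat (mat n n (\<lambda>(a,b). \<Sum>t\<in>T. w t a * w t b))"
    and invJ0: "invertible_mat (mat Dth Dth (\<lambda>(a,b). \<Sum>t\<in>T0. w t a * w t b))"
begin

abbreviation "J \<equiv> mat n n (\<lambda>(a,b). \<Sum>t\<in>T. w t a * w t b)"
abbreviation "J0 \<equiv> mat Dth Dth (\<lambda>(a,b). \<Sum>t\<in>T0. w t a * w t b)"
abbreviation "L \<equiv> lead_submat Dth (mat_inv J)"

lemma Jc: "J \<in> carrier_mat n n" and J0c: "J0 \<in> carrier_mat Dth Dth" by auto

lemma Jsym: "transpose_mat J = J" by (intro eq_matI) (auto simp: mult.commute)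
lemma J0sym: "transpose_mat J0 = J0" by (intro eq_matI) (auto simp: mult.commute)

lemmas Jp = mat_inv_props[OF invJ Jc]
lemmas J0p = mat_inv_props[OF invJ0 J0c]

lemma Jisym: "transpose_mat (mat_inv J) = mat_inv J" by (rule mat_inv_sym[OF invJ Jc Jsym])
lemma J0isym: "transpose_mat (mat_inv J0) = mat_inv J0" by (rule mat_inv_sym[OF invJ0 J0c J0sym])

lemma Lc: "L \<in> carrier_mat Dth Dth" by (simp add: lead_submat_def)

lemma Lsym: "transpose_mat L = L"
proof (intro eq_matI)
  fix i j assume ij: "i < dim_row L" "j < dim_col L"
  have "mat_inv J $$ (j,i) = transpose_mat (mat_inv J) $$ (i,j)" using ij Jp(1) Dn by (auto simp: lead_submat_def)
  then show "transpose_mat L $$ (i, j) = L $$ (i, j)" using ij Jisym by (simp add: lead_submat_def)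
qed (auto simp: lead_submat_def)

lemma quad:
  assumes x: "x \<in> carrier_vec Dth"
  defines "y \<equiv> mat_inv J *\<^sub>v xt n Dth x" and "z \<equiv> mat_inv J0 *\<^sub>v x"
  shows "x \<bullet> ((mat_inv J0 - L) *\<^sub>v x)
     = (\<Sum>t\<in>T0. ((\<Sum>b\<in>{0..<Dth}. w t b * z $ b) - (\<Sum>b\<in>{0..<n}. w t b * y $ b))^2)
       + (\<Sum>t\<in>T-T0. ((\<Sum>b\<in>{0..<n}. w t b * y $ b))^2)"
proof -
  have xtc: "xt n Dth x \<in> carrier_vec n" by (simp add: xt_def)
  have yc: "y \<in> carrier_vec n" unfolding y_def using Jp(1) xtc by simp
  have zc: "z \<in> carrier_vec Dth" unfolding z_def using J0p(1) x by simp
  have Jy: "J *\<^sub>v y = xt n Dth x" unfolding y_def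
    using assoc_mult_mat_vec[OF Jc Jp(1) xtc, symmetric] Jp(2) xtc by simp
  have J0z: "J0 *\<^sub>v z = x" unfolding z_def
    using assoc_mult_mat_vec[OF J0c J0p(1) x, symmetric] J0p(2) x by simp
  have hy: "\<forall>i<n. (\<Sum>t\<in>T. w t i * (\<Sum>b\<in>{0..<n}. w t b * y $ b)) = (if i < Dth then x $ i else 0)"
  proof (intro allI impI)
    fix i assume i: "i < n"
    have "(J *\<^sub>v y) $ i = (\<Sum>t\<in>T. w t i * (\<Sum>b\<in>{0..<n}. w t b * y $ b))"
      by (rule gram_mult[OF yc i])
    then show "(\<Sum>t\<in>T. w t i * (\<Sum>b\<in>{0..<n}. w t b * y $ b)) = (if i < Dth then x $ i else 0)"
      using Jy i by (simp add: xt_def)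
  qed
  have hz: "\<forall>i<Dth. (\<Sum>t\<in>T0. w t i * (\<Sum>b\<in>{0..<Dth}. w t b * z $ b)) = x $ i"
  proof (intro allI impI)
    fix i assume i: "i < Dth"
    have "(J0 *\<^sub>v z) $ i = (\<Sum>t\<in>T0. w t i * (\<Sum>b\<in>{0..<Dth}. w t b * z $ b))"
      by (rule gram_mult[OF zc i])
    then show "(\<Sum>t\<in>T0. w t i * (\<Sum>b\<in>{0..<Dth}. w t b * z $ b)) = x $ i"
      using J0z by simp
  qed
  have ci: "(\<Sum>i\<in>{0..<Dth}. x $ i * z $ i) - (\<Sum>i\<in>{0..<Dth}. x $ i * y $ i)
     = (\<Sum>t\<in>T0. ((\<Sum>b\<in>{0..<Dth}. w t b * z $ b) - (\<Sum>b\<in>{0..<n}. w t b * y $ b))^2)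
       + (\<Sum>t\<in>T-T0. ((\<Sum>b\<in>{0..<n}. w t b * y $ b))^2)"
    by (rule core_identity[OF fin sub Dn supp0 refl refl hy hz])
  have Lx: "(L *\<^sub>v x) $ i = y $ i" if "i < Dth" for i
    unfolding y_def xt_def by (rule lead_mult[OF x Dn Jp(1) that])
  have "x \<bullet> ((mat_inv J0 - L) *\<^sub>v x) = x \<bullet> (mat_inv J0 *\<^sub>v x) - x \<bullet> (L *\<^sub>v x)"
    using J0p(1) Lc x by (simp add: minus_mult_distrib_mat_vec scalar_prod_minus_distrib[of _ Dth])
  also have "x \<bullet> (mat_inv J0 *\<^sub>v x) = (\<Sum>i\<in>{0..<Dth}. x $ i * z $ i)"
    unfolding z_def[symmetric] scalar_prod_def using zc by simp
  also have "x \<bullet> (L *\<^sub>v x) = (\<Sum>i\<in>{0..<Dth}. x $ i * y $ i)"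
    using Lc Lx unfolding scalar_prod_def by simp
  finally show ?thesis using ci by simp
qed

lemma loewner: "loewner_le L (mat_inv J0)"
  unfolding loewner_le_def
proof (intro exI[of _ Dth] conjI ballI)
  fix x :: "real Matrix.vec" assume x: "x \<in> carrier_vec Dth"
  show "0 \<le> x \<bullet> ((mat_inv J0 - L) *\<^sub>v x)"
    unfolding quad[OF x] by (intro add_nonneg_nonneg sum_nonneg) auto
qed (use Lc J0p(1) Lsym J0isym in auto)

end


lemma zero_mat_vec: "v \<in> carrier_vec m \<Longrightarrow> (0\<^sub>m n m :: real mat) *\<^sub>v v = 0\<^sub>v n"
  by (intro eq_vecI) (auto simp: scalar_prod_def row_def)

lemma split_sum:
  fixes f :: "nat \<Rightarrow> real"
  assumes "Dth \<le> off" "off + D \<le> n"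
    and z: "\<forall>b<n. Dth \<le> b \<longrightarrow> b \<notin> {off..<off+D} \<longrightarrow> f b = 0"
  shows "(\<Sum>b\<in>{0..<n}. f b) = (\<Sum>b\<in>{0..<Dth}. f b) + (\<Sum>l\<in>{0..<D}. f (off + l))"
proof -
  have "(\<Sum>b\<in>{0..<n}. f b) = (\<Sum>b\<in>{0..<Dth} \<union> {off..<off+D}. f b)"
    using assms by (intro sum.mono_neutral_right) auto
  also have "\<dots> = (\<Sum>b\<in>{0..<Dth}. f b) + (\<Sum>b\<in>{off..<off+D}. f b)"
    using assms by (intro sum.union_disjoint) auto
  also have "(\<Sum>b\<in>{off..<off+D}. f b) = (\<Sum>l\<in>{0..<D}. f (off + l))"
    using sum.shift_bounds_nat_ivl[of f 0 off D] by (simp add: add.commute)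
  finally show ?thesis .
qed

locale gram_groups = gram n Dth T T0 w for n Dth T T0 and w :: "'t \<Rightarrow> nat \<Rightarrow> real" +
  fixes P :: nat and Tp :: "nat \<Rightarrow> 't set" and off Dp :: "nat \<Rightarrow> nat"
  assumes cover: "\<forall>t\<in>T-T0. \<exists>p\<in>{1..P}. t \<in> Tp p"
   and Tsub: "\<forall>p\<in>{1..P}. Tp p \<subseteq> T \<and> Tp p \<inter> T0 = {}"
   and blk: "\<forall>p\<in>{1..P}. Dth \<le> off p \<and> off p + Dp p \<le> n"
   and bdisj: "\<forall>p\<in>{1..P}. \<forall>q\<in>{1..P}. p \<noteq> q \<longrightarrow> {off p..<off p + Dp p} \<inter> {off q..<off q + Dp q} = {}"
   and suppP: "\<forall>p\<in>{1..P}. \<forall>t\<in>Tp p. \<forall>b<n. Dth \<le> b \<longrightarrow> b \<notin> {off p..<off p + Dp p} \<longrightarrow> w t b = 0"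
begin

lemma eq_imp:
  assumes eq: "L = mat_inv J0" and p: "p \<in> {1..P}"
  shows "\<exists>C\<in>carrier_mat Dth (Dp p). \<forall>t\<in>Tp p. \<forall>i<Dth.
           w t i = (\<Sum>l\<in>{0..<Dp p}. C $$ (i,l) * w t (off p + l))"
proof -
  define xs where "xs i = J0 *\<^sub>v unit_vec Dth i" for i
  define ys where "ys i = mat_inv J *\<^sub>v xt n Dth (xs i)" for i
  define C where "C = mat Dth (Dp p) (\<lambda>(i,l). - (ys i $ (off p + l)))"
  have xc: "xs i \<in> carrier_vec Dth" for i unfolding xs_def by (rule mult_mat_vec_carrier[OF J0c]) simp
  have zeq: "mat_inv J0 *\<^sub>v xs i = unit_vec Dth i" for i
    by (rule mat_inv_solve[OF invJ0 J0c]) (auto simp: xs_def)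
  have ysl: "ys i $ b = unit_vec Dth i $ b" if "b < Dth" for i b
  proof -
    have "ys i $ b = (L *\<^sub>v xs i) $ b"
      unfolding ys_def xt_def by (rule lead_mult[OF xc Dn Jp(1) that, symmetric])
    then show ?thesis using eq zeq by simp
  qed
  have s0: "(\<Sum>b\<in>{0..<n}. w t b * ys i $ b) = 0" if t: "t \<in> Tp p" and i: "i < Dth" for t i
  proof -
    have "xs i \<bullet> ((mat_inv J0 - L) *\<^sub>v xs i) = 0"
      using eq J0p(1) xc[of i]
      by (simp add: zero_mat_vec)
    then have "(\<Sum>t\<in>T0. ((\<Sum>b\<in>{0..<Dth}. w t b * (mat_inv J0 *\<^sub>v xs i) $ b) - (\<Sum>b\<in>{0..<n}. w t b * ys i $ b))^2)
       + (\<Sum>t\<in>T-T0. ((\<Sum>b\<in>{0..<n}. w t b * ys i $ b))^2) = 0"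
      unfolding quad[OF xc] ys_def by simp
    moreover have "0 \<le> (\<Sum>t\<in>T0. ((\<Sum>b\<in>{0..<Dth}. w t b * (mat_inv J0 *\<^sub>v xs i) $ b) - (\<Sum>b\<in>{0..<n}. w t b * ys i $ b))^2)"
      by (intro sum_nonneg) auto
    moreover have "0 \<le> (\<Sum>t\<in>T-T0. ((\<Sum>b\<in>{0..<n}. w t b * ys i $ b))^2)"
      by (intro sum_nonneg) auto
    ultimately have "(\<Sum>t\<in>T-T0. ((\<Sum>b\<in>{0..<n}. w t b * ys i $ b))^2) = 0" by linarith
    moreover have "t \<in> T - T0" using Tsub p t by auto
    ultimately have "((\<Sum>b\<in>{0..<n}. w t b * ys i $ b))^2 = 0"
      using fin by (subst (asm) sum_nonneg_eq_0_iff) auto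
    then show ?thesis by simp
  qed
  show ?thesis
  proof (intro bexI[of _ C] ballI allI impI)
    show "C \<in> carrier_mat Dth (Dp p)" unfolding C_def by simp
    fix t i assume t: "t \<in> Tp p" and i: "i < Dth"
    have "(\<Sum>b\<in>{0..<n}. w t b * ys i $ b)
       = (\<Sum>b\<in>{0..<Dth}. w t b * ys i $ b) + (\<Sum>l\<in>{0..<Dp p}. w t (off p + l) * ys i $ (off p + l))"
      using blk p suppP t by (intro split_sum) auto
    also have "(\<Sum>b\<in>{0..<Dth}. w t b * ys i $ b) = (\<Sum>b\<in>{0..<Dth}. if b = i then w t b else 0)"
      using ysl i by (intro sum.cong) auto
    also have "\<dots> = w t i" using i by simp
    finally have "w t i = - (\<Sum>l\<in>{0..<Dp p}. w t (off p + l) * ys i $ (off p + l))"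
      using s0[OF t i] by linarith
    also have "\<dots> = (\<Sum>l\<in>{0..<Dp p}. C $$ (i,l) * w t (off p + l))"
      unfolding sum_negf[symmetric] using i by (intro sum.cong) (auto simp: C_def)
    finally show "w t i = (\<Sum>l\<in>{0..<Dp p}. C $$ (i,l) * w t (off p + l))" .
  qed
qed


lemma imp_eq:
  assumes H: "\<forall>p\<in>{1..P}. \<exists>C\<in>carrier_mat Dth (Dp p). \<forall>t\<in>Tp p. \<forall>i<Dth.
           w t i = (\<Sum>l\<in>{0..<Dp p}. C $$ (i,l) * w t (off p + l))"
  shows "L = mat_inv J0"
proof -
  have H': "\<forall>p\<in>{1..P}. \<exists>C. C \<in> carrier_mat Dth (Dp p) \<and> (\<forall>t\<in>Tp p. \<forall>i<Dth.
           w t i = (\<Sum>l\<in>{0..<Dp p}. C $$ (i,l) * w t (off p + l)))" using H by blast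
  from bchoice[OF H'] obtain C where C: "\<forall>p\<in>{1..P}. C p \<in> carrier_mat Dth (Dp p) \<and> (\<forall>t\<in>Tp p. \<forall>i<Dth.
           w t i = (\<Sum>l\<in>{0..<Dp p}. C p $$ (i,l) * w t (off p + l)))" by blast
  show ?thesis
  proof (rule eq_matI)
    show "dim_row L = dim_row (mat_inv J0)" "dim_col L = dim_col (mat_inv J0)"
      using J0p(1) by (auto simp: lead_submat_def)
    fix i j assume "i < dim_row (mat_inv J0)" "j < dim_col (mat_inv J0)"
    hence i: "i < Dth" and j: "j < Dth" using J0p(1) by auto
    define x :: "real Matrix.vec" where "x = unit_vec Dth j"
    define z where "z = mat_inv J0 *\<^sub>v x"
    have xc: "x \<in> carrier_vec Dth" unfolding x_def by simp
    have zc: "z \<in> carrier_vec Dth" unfolding z_def using J0p(1) xc by simp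
    have J0z: "J0 *\<^sub>v z = x" unfolding z_def
      using assoc_mult_mat_vec[OF J0c J0p(1) xc, symmetric] J0p(2) xc by simp
    define F where "F q b = - (\<Sum>i\<in>{0..<Dth}. C q $$ (i, b - off q) * z $ i)" for q b
    define yv where "yv = vec n (\<lambda>b. if b < Dth then z $ b else
       (\<Sum>q\<in>{1..P}. if off q \<le> b \<and> b < off q + Dp q then F q b else 0))"
    have yvc: "yv \<in> carrier_vec n" unfolding yv_def by simp
    have yv0: "yv $ b = z $ b" if "b < Dth" for b using that Dn unfolding yv_def by simp
    have yvp: "yv $ (off p + l) = - (\<Sum>i\<in>{0..<Dth}. C p $$ (i, l) * z $ i)"
      if p: "p \<in> {1..P}" and l: "l < Dp p" for p l
    proof -
      have "Dth \<le> off p \<and> off p + Dp p \<le> n" using blk p by blast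
      then have bl: "off p + l < n" "\<not> off p + l < Dth" using l by auto
      have "(\<Sum>q\<in>{1..P}. if off q \<le> off p + l \<and> off p + l < off q + Dp q then F q (off p + l) else 0)
          = (\<Sum>q\<in>{1..P}. if q = p then F q (off p + l) else 0)"
      proof (intro sum.cong refl)
        fix q assume q: "q \<in> {1..P}"
        show "(if off q \<le> off p + l \<and> off p + l < off q + Dp q then F q (off p + l) else 0)
            = (if q = p then F q (off p + l) else 0)"
        proof (cases "q = p")
          case False
          then have "off p + l \<notin> {off q..<off q + Dp q}"
            using bdisj p q l by fastforce
          then show ?thesis using False by auto
        qed (use l in auto)
      qed
      also have "\<dots> = F p (off p + l)" using p by simp
      finally show ?thesis using bl unfolding yv_def F_def by simp
    qed
    have sv: "(\<Sum>b\<in>{0..<n}. w t b * yv $ b) = (if t \<in> T0 then (\<Sum>b\<in>{0..<Dth}. w t b * z $ b) else 0)"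
      if t: "t \<in> T" for t
    proof (cases "t \<in> T0")
      case True
      have "(\<Sum>b\<in>{0..<n}. w t b * yv $ b) = (\<Sum>b\<in>{0..<Dth}. w t b * yv $ b) + (\<Sum>b\<in>{Dth..<n}. w t b * yv $ b)"
        using Dn sum.atLeastLessThan_concat[of 0 Dth n "\<lambda>b. w t b * yv $ b"] by simp
      also have "(\<Sum>b\<in>{Dth..<n}. w t b * yv $ b) = 0" using supp0 True by auto
      also have "(\<Sum>b\<in>{0..<Dth}. w t b * yv $ b) = (\<Sum>b\<in>{0..<Dth}. w t b * z $ b)"
        using yv0 by (intro sum.cong) auto
      finally show ?thesis using True by simp
    next
      case False
      then obtain p where p: "p \<in> {1..P}" and tp: "t \<in> Tp p" using cover t by blast
      have "(\<Sum>b\<in>{0..<n}. w t b * yv $ b)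
         = (\<Sum>b\<in>{0..<Dth}. w t b * yv $ b) + (\<Sum>l\<in>{0..<Dp p}. w t (off p + l) * yv $ (off p + l))"
        using blk p suppP tp by (intro split_sum) auto
      also have "(\<Sum>b\<in>{0..<Dth}. w t b * yv $ b) = (\<Sum>b\<in>{0..<Dth}. w t b * z $ b)"
        using yv0 by (intro sum.cong) auto
      also have "(\<Sum>l\<in>{0..<Dp p}. w t (off p + l) * yv $ (off p + l))
          = (\<Sum>l\<in>{0..<Dp p}. - (\<Sum>i\<in>{0..<Dth}. w t (off p + l) * C p $$ (i, l) * z $ i))"
        using yvp[OF p] by (intro sum.cong) (auto simp: sum_distrib_left mult_ac)
      also have "\<dots> = - (\<Sum>i\<in>{0..<Dth}. (\<Sum>l\<in>{0..<Dp p}. C p $$ (i, l) * w t (off p + l)) * z $ i)"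
        unfolding sum_negf sum_distrib_right by (subst sum.swap) (simp add: mult_ac)
      also have "\<dots> = - (\<Sum>i\<in>{0..<Dth}. w t i * z $ i)"
        using C p tp by (intro arg_cong[where f=uminus] sum.cong) auto
      finally show ?thesis using False by simp
    qed
    have Jy: "J *\<^sub>v yv = xt n Dth x"
    proof (rule eq_vecI)
      show "dim_vec (J *\<^sub>v yv) = dim_vec (xt n Dth x)" by (simp add: xt_def)
      fix a assume "a < dim_vec (xt n Dth x)"
      hence a: "a < n" by (simp add: xt_def)
      have "(J *\<^sub>v yv) $ a = (\<Sum>t\<in>T. w t a * (\<Sum>b\<in>{0..<n}. w t b * yv $ b))"
        by (rule gram_mult[OF yvc a])
      also have "\<dots> = (\<Sum>t\<in>T. if t \<in> T0 then w t a * (\<Sum>b\<in>{0..<Dth}. w t b * z $ b) else 0)"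
        using sv by (intro sum.cong) auto
      also have "\<dots> = (\<Sum>t\<in>T0. w t a * (\<Sum>b\<in>{0..<Dth}. w t b * z $ b))"
        using fin sub by (simp add: sum.If_cases Int_absorb1)
      also have "\<dots> = xt n Dth x $ a"
      proof (cases "a < Dth")
        case True
        have "(J0 *\<^sub>v z) $ a = (\<Sum>t\<in>T0. w t a * (\<Sum>b\<in>{0..<Dth}. w t b * z $ b))"
          by (rule gram_mult[OF zc True])
        then show ?thesis using J0z True a by (simp add: xt_def)
      next
        case False
        then show ?thesis using supp0 a by (simp add: xt_def)
      qed
      finally show "(J *\<^sub>v yv) $ a = xt n Dth x $ a" .
    qed
    have yvs: "mat_inv J *\<^sub>v xt n Dth x = yv" by (rule mat_inv_solve[OF invJ Jc yvc Jy])
    have "L $$ (i,j) = (L *\<^sub>v x) $ i" unfolding x_def using Lc i j by (simp only: mat_mult_unit)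
    also have "\<dots> = (mat_inv J *\<^sub>v xt n Dth x) $ i"
      unfolding xt_def by (rule lead_mult[OF xc Dn Jp(1) i])
    also have "\<dots> = z $ i" using yvs yv0 i by simp
    also have "\<dots> = mat_inv J0 $$ (i,j)" unfolding z_def x_def using J0p(1) i j by (simp only: mat_mult_unit)
    finally show "L $$ (i,j) = mat_inv J0 $$ (i,j)" .
  qed
qed

end



lemma svd_range:
  assumes "is_svd Ph U L V"
  shows "mat_range (V * transpose_mat L) = mat_range (transpose_mat Ph)"
proof -
  obtain d M where dM: "d = dim_row Ph" "M = dim_col Ph" by blast
  have U: "U \<in> carrier_mat d d" and L: "L \<in> carrier_mat d M" and V: "V \<in> carrier_mat M M"
    and UU: "transpose_mat U * U = 1\<^sub>m d" and Ph: "Ph = U * L * transpose_mat V"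
    using assms unfolding is_svd_def Let_def dM[symmetric] by blast+
  have dd: "dim_row Ph = d" using dM by simp
  have ULc: "U * L \<in> carrier_mat d M" using U L by simp
  have "transpose_mat Ph = transpose_mat (transpose_mat V) * transpose_mat (U * L)"
    unfolding Ph by (rule transpose_mult[OF ULc]) (use V in simp)
  also have "\<dots> = V * (transpose_mat L * transpose_mat U)"
    using transpose_mult[OF U L] by simp
  also have "\<dots> = V * transpose_mat L * transpose_mat U"
    by (rule assoc_mult_mat[symmetric, of V M M _ d _ d]) (use U L V in auto)
  finally have PhT: "transpose_mat Ph = V * transpose_mat L * transpose_mat U" .
  have VL: "V * transpose_mat L \<in> carrier_mat M d" using V L by simp
  have Ut: "transpose_mat U \<in> carrier_mat d d" using U by simp
  show ?thesis
  proof
    show "mat_range (V * transpose_mat L) \<subseteq> mat_range (transpose_mat Ph)"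
    proof
      fix v assume "v \<in> mat_range (V * transpose_mat L)"
      then obtain x where x: "x \<in> carrier_vec d" and v: "v = V * transpose_mat L *\<^sub>v x"
        unfolding mat_range_def using VL by auto
      have Ux: "U *\<^sub>v x \<in> carrier_vec d" using U x by simp
      have "transpose_mat Ph *\<^sub>v (U *\<^sub>v x) = V * transpose_mat L *\<^sub>v (transpose_mat U *\<^sub>v (U *\<^sub>v x))"
        unfolding PhT by (rule assoc_mult_mat_vec[OF VL Ut Ux])
      also have "transpose_mat U *\<^sub>v (U *\<^sub>v x) = x"
        using assoc_mult_mat_vec[OF Ut U x, symmetric] UU x by simp
      finally have "v = transpose_mat Ph *\<^sub>v (U *\<^sub>v x)" using v by simp
      moreover have "U *\<^sub>v x \<in> carrier_vec (dim_col (transpose_mat Ph))" using Ux dd by simp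
      ultimately show "v \<in> mat_range (transpose_mat Ph)"
        unfolding mat_range_def by blast
    qed
  next
    show "mat_range (transpose_mat Ph) \<subseteq> mat_range (V * transpose_mat L)"
    proof
      fix v assume "v \<in> mat_range (transpose_mat Ph)"
      then obtain x where x: "x \<in> carrier_vec d" and v: "v = transpose_mat Ph *\<^sub>v x"
        unfolding mat_range_def using dd by auto
      have "v = V * transpose_mat L *\<^sub>v (transpose_mat U *\<^sub>v x)"
        unfolding v PhT by (rule assoc_mult_mat_vec[OF VL Ut x])
      moreover have "transpose_mat U *\<^sub>v x \<in> carrier_vec (dim_col (V * transpose_mat L))"
        using Ut x L by simp
      ultimately show "v \<in> mat_range (V * transpose_mat L)"
        unfolding mat_range_def by blast
    qed
  qed
qed


lemma range_incl:
  fixes F1 F2 :: "real mat"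
  assumes F1: "F1 \<in> carrier_mat d1 M" and F2: "F2 \<in> carrier_mat d2 M"
  shows "mat_range (transpose_mat F1) \<subseteq> mat_range (transpose_mat F2)
     \<longleftrightarrow> (\<exists>C\<in>carrier_mat d1 d2. F1 = C * F2)"
proof
  assume "\<exists>C\<in>carrier_mat d1 d2. F1 = C * F2"
  then obtain C where C: "C \<in> carrier_mat d1 d2" and e: "F1 = C * F2" by blast
  show "mat_range (transpose_mat F1) \<subseteq> mat_range (transpose_mat F2)"
  proof
    fix v assume "v \<in> mat_range (transpose_mat F1)"
    then obtain x where x: "x \<in> carrier_vec d1" and v: "v = transpose_mat F1 *\<^sub>v x"
      unfolding mat_range_def using F1 by auto
    have "v = transpose_mat F2 *\<^sub>v (transpose_mat C *\<^sub>v x)"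
      unfolding v e using C F2 x by (simp add: transpose_mult[OF C F2] assoc_mult_mat_vec[of _ M d2 _ d1])
    then show "v \<in> mat_range (transpose_mat F2)"
      unfolding mat_range_def using C F2 x by (auto intro!: exI[of _ "transpose_mat C *\<^sub>v x"])
  qed
next
  assume sub: "mat_range (transpose_mat F1) \<subseteq> mat_range (transpose_mat F2)"
  have "\<forall>i. \<exists>c. i < d1 \<longrightarrow> c \<in> carrier_vec d2 \<and> transpose_mat F1 *\<^sub>v unit_vec d1 i = transpose_mat F2 *\<^sub>v c"
  proof (intro allI)
    fix i show "\<exists>c. i < d1 \<longrightarrow> c \<in> carrier_vec d2 \<and> transpose_mat F1 *\<^sub>v unit_vec d1 i = transpose_mat F2 *\<^sub>v c"
    proof (cases "i < d1")
      case True
      have "transpose_mat F1 *\<^sub>v unit_vec d1 i \<in> mat_range (transpose_mat F1)"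
        unfolding mat_range_def using F1 by auto
      then have "transpose_mat F1 *\<^sub>v unit_vec d1 i \<in> mat_range (transpose_mat F2)" using sub by blast
      then obtain c where "c \<in> carrier_vec d2" "transpose_mat F1 *\<^sub>v unit_vec d1 i = transpose_mat F2 *\<^sub>v c"
        using F2 unfolding mat_range_def by auto
      then show ?thesis by blast
    qed simp
  qed
  then obtain c where c0: "\<forall>i. i < d1 \<longrightarrow> c i \<in> carrier_vec d2 \<and>
      transpose_mat F1 *\<^sub>v unit_vec d1 i = transpose_mat F2 *\<^sub>v c i" by (rule choice[THEN exE])
  have c: "c i \<in> carrier_vec d2 \<and> transpose_mat F1 *\<^sub>v unit_vec d1 i = transpose_mat F2 *\<^sub>v c i"
    if "i < d1" for i using c0 that by blast
  define C where "C = mat d1 d2 (\<lambda>(i,l). c i $ l)"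
  show "\<exists>C\<in>carrier_mat d1 d2. F1 = C * F2"
  proof (intro bexI[of _ C] eq_matI)
    fix i m assume "i < dim_row (C * F2)" "m < dim_col (C * F2)"
    hence i: "i < d1" and m: "m < M" using F2 by (auto simp: C_def)
    have "F1 $$ (i,m) = (transpose_mat F1 *\<^sub>v unit_vec d1 i) $ m"
      using F1 i m scalar_prod_right_unit[OF i, of "Matrix.row (transpose_mat F1) m"] by simp
    also have "\<dots> = (transpose_mat F2 *\<^sub>v c i) $ m" using c[OF i] by simp
    also have "\<dots> = (C * F2) $$ (i,m)"
    proof -
      have ci: "dim_vec (c i) = d2" using c[OF i] by auto
      have "(transpose_mat F2 *\<^sub>v c i) $ m = (\<Sum>ia\<in>{0..<d2}. F2 $$ (ia,m) * c i $ ia)"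
        using F2 m ci unfolding scalar_prod_def by (auto simp: scalar_prod_def intro!: sum.cong)
      moreover have "(C * F2) $$ (i,m) = (\<Sum>ia\<in>{0..<d2}. c i $ ia * F2 $$ (ia,m))"
        using F2 m i unfolding scalar_prod_def C_def by (auto simp: scalar_prod_def intro!: sum.cong)
      ultimately show ?thesis by (simp add: mult.commute)
    qed
    finally show "F1 $$ (i,m) = (C * F2) $$ (i,m)" .
  qed (use F1 F2 in \<open>auto simp: C_def\<close>)
qed



definition trip :: "nat set \<Rightarrow> (nat \<Rightarrow> nat) \<Rightarrow> (nat \<Rightarrow> nat) \<Rightarrow> (nat \<times> nat \<times> nat) set" where
  "trip S K R = Sigma S (\<lambda>j. Sigma {1..K j} (\<lambda>k. {1..R j}))"

definition wf :: "nat \<Rightarrow> (nat \<Rightarrow> nat \<Rightarrow> nat \<Rightarrow> real Matrix.vec \<Rightarrow> real) \<Rightarrow> real Matrix.vec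
     \<Rightarrow> nat \<times> nat \<times> nat \<Rightarrow> nat \<Rightarrow> real" where
  "wf n Pr Th t b = (case t of (j,k,r) \<Rightarrow> grad n (Pr j k r) Th $ b / sqrt (Pr j k r Th))"

lemma finite_trip: "finite S \<Longrightarrow> finite (trip S K R)"
  unfolding trip_def by (intro finite_SigmaI) auto

lemma trip_mono: "S \<subseteq> S' \<Longrightarrow> trip S K R \<subseteq> trip S' K R"
  unfolding trip_def by auto

lemma nested_sum:
  fixes F :: "nat \<Rightarrow> nat \<Rightarrow> nat \<Rightarrow> real"
  assumes "finite S"
  shows "(\<Sum>j\<in>S. \<Sum>k\<in>{1..K j}. \<Sum>r\<in>{1..R j}. F j k r) = (\<Sum>(j,k,r)\<in>trip S K R. F j k r)"
proof -
  have "(\<Sum>j\<in>S. \<Sum>k\<in>{1..K j}. \<Sum>r\<in>{1..R j}. F j k r)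
      = (\<Sum>j\<in>S. \<Sum>(k,r)\<in>Sigma {1..K j} (\<lambda>k. {1..R j}). F j k r)"
    by (intro sum.cong refl sum.Sigma) auto
  also have "\<dots> = (\<Sum>(j,kr)\<in>Sigma S (\<lambda>j. Sigma {1..K j} (\<lambda>k. {1..R j})). (case kr of (k,r) \<Rightarrow> F j k r))"
    using assms by (subst sum.Sigma) (auto simp: split_def)
  finally show ?thesis unfolding trip_def by (simp add: split_def)
qed

lemma fisher_eq:
  assumes fin: "finite S" and pos: "\<forall>(j,k,r)\<in>trip S K R. 0 < Pr j k r Th"
  shows "fisher_block n off m Pr S K R Th
     = mat m m (\<lambda>(a,b). \<Sum>t\<in>trip S K R. wf n Pr Th t (off+a) * wf n Pr Th t (off+b))"
  unfolding fisher_block_def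
proof (intro eq_matI)
  fix a b assume "a < dim_row (mat m m (\<lambda>(a,b). \<Sum>t\<in>trip S K R. wf n Pr Th t (off+a) * wf n Pr Th t (off+b)))"
    "b < dim_col (mat m m (\<lambda>(a,b). \<Sum>t\<in>trip S K R. wf n Pr Th t (off+a) * wf n Pr Th t (off+b)))"
  hence ab: "a < m" "b < m" by auto
  have "(\<Sum>j\<in>S. \<Sum>k\<in>{1..K j}. \<Sum>r\<in>{1..R j}.
       (grad n (Pr j k r) Th $ (off + a)) * (grad n (Pr j k r) Th $ (off + b)) / Pr j k r Th)
     = (\<Sum>(j,k,r)\<in>trip S K R. (grad n (Pr j k r) Th $ (off + a)) * (grad n (Pr j k r) Th $ (off + b)) / Pr j k r Th)"
    by (rule nested_sum[OF fin])
  also have "\<dots> = (\<Sum>t\<in>trip S K R. wf n Pr Th t (off+a) * wf n Pr Th t (off+b))"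
  proof (intro sum.cong refl)
    fix t assume t: "t \<in> trip S K R"
    obtain j k r where tt: "t = (j,k,r)" by (cases t) auto
    have p: "0 < Pr j k r Th" using pos t tt by auto
    have "sqrt (Pr j k r Th) * sqrt (Pr j k r Th) = Pr j k r Th" using p by simp
    then show "(case t of (j,k,r) \<Rightarrow> (grad n (Pr j k r) Th $ (off + a)) * (grad n (Pr j k r) Th $ (off + b)) / Pr j k r Th)
        = wf n Pr Th t (off+a) * wf n Pr Th t (off+b)"
      unfolding tt wf_def by simp
  qed
  finally show "mat m m (\<lambda>(a,b). \<Sum>j\<in>S. \<Sum>k\<in>{1..K j}. \<Sum>r\<in>{1..R j}.
       (grad n (Pr j k r) Th $ (off + a)) * (grad n (Pr j k r) Th $ (off + b)) / Pr j k r Th) $$ (a,b)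
     = mat m m (\<lambda>(a,b). \<Sum>t\<in>trip S K R. wf n Pr Th t (off+a) * wf n Pr Th t (off+b)) $$ (a,b)"
    using ab by simp
qed auto

lemma set_triples: "finite S \<Longrightarrow> set (triples S K R) = trip S K R"
  unfolding triples_def trip_def
  by (simp del: upt_Suc add: atLeastLessThanSuc_atLeastAtMost set_concat image_image) blast

lemma Phi_eq: "Phi_mat n off m Pr S K R Th = mat_of_cols m (map (\<lambda>t. vec m (\<lambda>a. wf n Pr Th t (off + a))) (triples S K R))"
proof -
  have "(\<lambda>(j,k,r). vec m (\<lambda>a. grad n (Pr j k r) Th $ (off + a) / sqrt (Pr j k r Th)))
      = (\<lambda>t. vec m (\<lambda>a. wf n Pr Th t (off + a)))"
    by (intro ext) (auto simp: wf_def split: prod.splits)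
  then show ?thesis unfolding Phi_mat_def by simp
qed

lemma cols_eq:
  fixes f g :: "'t \<Rightarrow> nat \<Rightarrow> real"
  assumes C: "C \<in> carrier_mat d1 d2"
  shows "mat_of_cols d1 (map (\<lambda>t. vec d1 (f t)) Ls) = C * mat_of_cols d2 (map (\<lambda>t. vec d2 (g t)) Ls)
     \<longleftrightarrow> (\<forall>t\<in>set Ls. \<forall>i<d1. f t i = (\<Sum>l\<in>{0..<d2}. C $$ (i,l) * g t l))"
proof -
  have ent: "(C * mat_of_cols d2 (map (\<lambda>t. vec d2 (g t)) Ls)) $$ (i,m) = (\<Sum>l\<in>{0..<d2}. C $$ (i,l) * g (Ls ! m) l)"
    if "i < d1" "m < length Ls" for i m
    using that C by (auto simp: scalar_prod_def mat_of_cols_index intro!: sum.cong)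
  have ent1: "mat_of_cols d1 (map (\<lambda>t. vec d1 (f t)) Ls) $$ (i,m) = f (Ls ! m) i"
    if "i < d1" "m < length Ls" for i m
    using that by (simp add: mat_of_cols_index)
  show ?thesis
  proof
    assume e: "mat_of_cols d1 (map (\<lambda>t. vec d1 (f t)) Ls) = C * mat_of_cols d2 (map (\<lambda>t. vec d2 (g t)) Ls)"
    show "\<forall>t\<in>set Ls. \<forall>i<d1. f t i = (\<Sum>l\<in>{0..<d2}. C $$ (i,l) * g t l)"
    proof (intro ballI allI impI)
      fix t i assume t: "t \<in> set Ls" and i: "i < d1"
      obtain m where m: "m < length Ls" "Ls ! m = t" using t by (auto simp: in_set_conv_nth)
      show "f t i = (\<Sum>l\<in>{0..<d2}. C $$ (i,l) * g t l)"
        using ent[OF i m(1)] ent1[OF i m(1)] e m(2) by simp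
    qed
  next
    assume h: "\<forall>t\<in>set Ls. \<forall>i<d1. f t i = (\<Sum>l\<in>{0..<d2}. C $$ (i,l) * g t l)"
    show "mat_of_cols d1 (map (\<lambda>t. vec d1 (f t)) Ls) = C * mat_of_cols d2 (map (\<lambda>t. vec d2 (g t)) Ls)"
    proof (rule eq_matI)
      fix i m assume "i < dim_row (C * mat_of_cols d2 (map (\<lambda>t. vec d2 (g t)) Ls))"
        "m < dim_col (C * mat_of_cols d2 (map (\<lambda>t. vec d2 (g t)) Ls))"
      hence i: "i < d1" and m: "m < length Ls" using C by auto
      show "mat_of_cols d1 (map (\<lambda>t. vec d1 (f t)) Ls) $$ (i,m) = (C * mat_of_cols d2 (map (\<lambda>t. vec d2 (g t)) Ls)) $$ (i,m)"
        using ent[OF i m] ent1[OF i m] h m i by (simp add: nth_mem)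
    qed (use C in auto)
  qed
qed

lemma grad_zero:
  assumes dif: "differentiable_vec n F x" and x: "x \<in> carrier_vec n" and i: "i < n"
    and inv: "\<forall>s. F (x + s \<cdot>\<^sub>v unit_vec n i) = F x"
  shows "grad n F x $ i = 0"
proof (rule ccontr)
  assume ne: "grad n F x $ i \<noteq> 0"
  let ?g = "grad n F x"
  have hg: "has_grad n F ?g x" using dif unfolding differentiable_vec_def grad_def by (rule someI_ex)
  have gc: "?g \<in> carrier_vec n" using hg unfolding has_grad_def by blast
  define e where "e = \<bar>?g $ i\<bar> / 2"
  have e: "e > 0" using ne unfolding e_def by simp
  obtain d where d: "d > 0" and H: "\<forall>h\<in>carrier_vec n. vnorm h < d \<longrightarrow>
        \<bar>F (x + h) - F x - scalar_prod ?g h\<bar> \<le> e * vnorm h"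
    using hg e unfolding has_grad_def by blast
  define h where "h = (d/2) \<cdot>\<^sub>v unit_vec n i"
  have hc: "h \<in> carrier_vec n" unfolding h_def by simp
  have hh: "h \<bullet> h = (d/2)^2" unfolding h_def using i by (simp add: power2_eq_square)
  have vn: "vnorm h = d/2" unfolding vnorm_def hh using d by simp
  have gh: "?g \<bullet> h = (d/2) * ?g $ i" unfolding h_def using i gc by simp
  have "\<bar>F (x + h) - F x - ?g \<bullet> h\<bar> \<le> e * vnorm h" using H hc vn d by simp
  also have "F (x + h) = F x" using inv unfolding h_def by blast
  finally have "\<bar>(d/2) * ?g $ i\<bar> \<le> e * (d/2)" using gh vn by simp
  then have "(d/2) * \<bar>?g $ i\<bar> \<le> (\<bar>?g $ i\<bar> / 2) * (d/2)" unfolding e_def using d by (simp add: abs_mult)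
  then show False using d ne by (simp add: field_simps)
qed


lemma par_off_le: "Dth \<le> par_off Dth D p" unfolding par_off_def by simp

lemma par_off_end: "par_off Dth D p + D p = Dth + (\<Sum>q\<in>{1..p}. D q)" if "1 \<le> p"
proof -
  have "{1..p} = insert p {1..<p}" using that by auto
  then show ?thesis unfolding par_off_def by simp
qed

lemma par_off_bound: assumes "p \<in> {1..P}" shows "par_off Dth D p + D p \<le> tot_dim Dth D P"
proof -
  have "(\<Sum>q\<in>{1..p}. D q) \<le> (\<Sum>q\<in>{1..P}. D q)" using assms by (intro sum_mono2) auto
  then show ?thesis using par_off_end[of p Dth D] assms unfolding tot_dim_def by simp
qed

lemma par_off_order: assumes "1 \<le> p" "p < q" shows "par_off Dth D p + D p \<le> par_off Dth D q"
proof -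
  have "(\<Sum>r\<in>{1..p}. D r) \<le> (\<Sum>r\<in>{1..<q}. D r)" using assms by (intro sum_mono2) auto
  then show ?thesis using par_off_end[of p Dth D] assms unfolding par_off_def by simp
qed

lemma blocks_disj:
  assumes "p \<in> {1..P}" "q \<in> {1..P}" "p \<noteq> q"
  shows "{par_off Dth D p..<par_off Dth D p + D p} \<inter> {par_off Dth D q..<par_off Dth D q + D q} = {}"
proof (cases "p < q")
  case True then show ?thesis using par_off_order[of p q Dth D] assms by auto
next
  case False then have "q < p" using assms by simp
  then show ?thesis using par_off_order[of q p Dth D] assms by auto
qed

lemma theta_unch:
  assumes "Th \<in> carrier_vec n" "Dth \<le> b" "b < n"
  shows "theta_part Dth (Th + s \<cdot>\<^sub>v unit_vec n b) = theta_part Dth Th"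
  unfolding theta_part_def using assms by (intro eq_vecI) auto

lemma tau_unch:
  assumes "Th \<in> carrier_vec n" "par_off Dth D p + D p \<le> n" "b < n"
    "b \<notin> {par_off Dth D p..<par_off Dth D p + D p}"
  shows "tau_part Dth D p (Th + s \<cdot>\<^sub>v unit_vec n b) = tau_part Dth D p Th"
  unfolding tau_part_def using assms by (intro eq_vecI) auto

lemma sensor_group_eq:
  assumes "j \<in> A p" "p \<le> P" and disj: "\<forall>p\<le>P. \<forall>q\<le>P. p \<noteq> q \<longrightarrow> A p \<inter> A q = {}"
  shows "sensor_group A P j = p"
  unfolding sensor_group_def
proof (rule the_equality)
  show "p \<le> P \<and> j \<in> A p" using assms by simp
  fix q assume "q \<le> P \<and> j \<in> A q"
  then show "q = p" using assms disj by blast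
qed

lemma qprob_inv:
  assumes "theta_part Dth Th' = theta_part Dth Th"
    and "j \<notin> A 0 \<Longrightarrow> tau_part Dth D (sensor_group A P j) Th' = tau_part Dth D (sensor_group A P j) Th"
  shows "qprob Dth D A P I f g j k r Th' = qprob Dth D A P I f g j k r Th"
  using assms unfolding qprob_def by simp


theorem theorem2:
  fixes N P Dth :: nat
    and D K R :: "nat \<Rightarrow> nat"
    and A :: "nat \<Rightarrow> nat set"
    and I :: "nat \<Rightarrow> nat \<Rightarrow> real set"
    and f :: "nat \<Rightarrow> nat \<Rightarrow> real \<Rightarrow> real Matrix.vec \<Rightarrow> real"
    and g :: "nat \<Rightarrow> nat \<Rightarrow> real \<Rightarrow> real Matrix.vec \<Rightarrow> real Matrix.vec \<Rightarrow> real"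
    and Th0 :: "real Matrix.vec"
    and Uth Lth Vth Utau Ltau Vtau :: "nat \<Rightarrow> real mat"
  defines "n \<equiv> tot_dim Dth D P"
    and "Pr \<equiv> qprob Dth D A P I f g"
  assumes sensors_cover: "(\<Union>p\<in>{0..P}. A p) = {1..N}"
    and sensors_disj: "\<forall>p\<le>P. \<forall>q\<le>P. p \<noteq> q \<longrightarrow> A p \<inter> A q = {}"
    and quantizer: "\<forall>j\<in>{1..N}. (\<forall>r\<in>{1..R j}. I j r \<in> sets lborel)
                       \<and> disjoint_family_on (I j) {1..R j} \<and> (\<Union>r\<in>{1..R j}. I j r) = UNIV"
    and pdf_f: "\<forall>j\<in>A 0. \<forall>k\<in>{1..K j}. \<forall>th\<in>carrier_vec Dth.
                  (\<forall>x. 0 \<le> f j k x th) \<and> (\<lambda>x. f j k x th) \<in> borel_measurable lborel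
                  \<and> integrable lborel (\<lambda>x. f j k x th) \<and> (\<integral>x. f j k x th \<partial>lborel) = 1"
    and pdf_g: "\<forall>p\<in>{1..P}. \<forall>j\<in>A p. \<forall>k\<in>{1..K j}. \<forall>th\<in>carrier_vec Dth. \<forall>tau\<in>carrier_vec (D p).
                  (\<forall>x. 0 \<le> g j k x th tau) \<and> (\<lambda>x. g j k x th tau) \<in> borel_measurable lborel
                  \<and> integrable lborel (\<lambda>x. g j k x th tau) \<and> (\<integral>x. g j k x th tau \<partial>lborel) = 1"
    and prob_pos_diff: "\<forall>j\<in>{1..N}. \<forall>k\<in>{1..K j}. \<forall>r\<in>{1..R j}. \<forall>Th\<in>carrier_vec n.
                  0 < Pr j k r Th \<and> differentiable_vec n (Pr j k r) Th"
    and Th0: "Th0 \<in> carrier_vec n"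
    and estimable: "\<forall>p\<in>{1..P}. invertible_mat (fisher_block n (par_off Dth D p) (D p) Pr (A p) K R Th0)"
    and JA0_nonsing: "invertible_mat (fisher_block n 0 Dth Pr (A 0) K R Th0)"
    and JTh_nonsing: "invertible_mat (fisher_block n 0 n Pr {1..N} K R Th0)"
    and svd_th: "\<forall>p\<in>{1..P}. is_svd (Phi_mat n 0 Dth Pr (A p) K R Th0) (Uth p) (Lth p) (Vth p)"
    and svd_tau: "\<forall>p\<in>{1..P}. is_svd (Phi_mat n (par_off Dth D p) (D p) Pr (A p) K R Th0)
                                 (Utau p) (Ltau p) (Vtau p)"
  shows "loewner_le (lead_submat Dth (mat_inv (fisher_block n 0 n Pr {1..N} K R Th0)))
                    (mat_inv (fisher_block n 0 Dth Pr (A 0) K R Th0))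
       \<and> (lead_submat Dth (mat_inv (fisher_block n 0 n Pr {1..N} K R Th0))
              = mat_inv (fisher_block n 0 Dth Pr (A 0) K R Th0)
          \<longleftrightarrow> (\<forall>p\<in>{1..P}. mat_range (Vth p * transpose_mat (Lth p))
                             \<subseteq> mat_range (Vtau p * transpose_mat (Ltau p))))"
  proof -
  define T where "T = trip {1..N} K R"
  define T0 where "T0 = trip (A 0) K R"
  define Tp where "Tp p = trip (A p) K R" for p
  define w where "w = wf n Pr Th0"
  define off where "off = par_off Dth D"
  have Asub: "A p \<subseteq> {1..N}" if "p \<le> P" for p using sensors_cover that by auto
  have pos: "\<forall>(j,k,r)\<in>trip S K R. 0 < Pr j k r Th0" if "S \<subseteq> {1..N}" for S
    using prob_pos_diff Th0 that unfolding trip_def by auto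
  have finS: "finite S" if "S \<subseteq> {1..N}" for S using that finite_subset by blast
  have f1: "finite {1..N}" by simp
  have p1: "\<forall>(j,k,r)\<in>trip {1..N} K R. 0 < Pr j k r Th0" using pos[of "{1..N}"] by simp
  have f0: "finite (A 0)" using finS Asub by blast
  have p0: "\<forall>(j,k,r)\<in>trip (A 0) K R. 0 < Pr j k r Th0" using pos[OF Asub[of 0]] by simp
  have FJ: "fisher_block n 0 n Pr {1..N} K R Th0 = mat n n (\<lambda>(a,b). \<Sum>t\<in>T. w t a * w t b)"
    using fisher_eq[where n=n and off=0 and m=n and S="{1..N}" and K=K and R=R and Pr=Pr and Th=Th0, OF f1 p1] unfolding T_def w_def by simp
  have FJ0: "fisher_block n 0 Dth Pr (A 0) K R Th0 = mat Dth Dth (\<lambda>(a,b). \<Sum>t\<in>T0. w t a * w t b)"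
    using fisher_eq[where n=n and off=0 and m=Dth and S="A 0" and K=K and R=R and Pr=Pr and Th=Th0, OF f0 p0] unfolding T0_def w_def by simp
  have Dn: "Dth \<le> n" unfolding n_def tot_dim_def by simp
  have wzero: "w t b = 0" if t: "t \<in> trip {1..N} K R" and b: "b < n"
    and inv: "\<And>s. Pr (fst t) (fst (snd t)) (snd (snd t)) (Th0 + s \<cdot>\<^sub>v unit_vec n b)
               = Pr (fst t) (fst (snd t)) (snd (snd t)) Th0" for t b
  proof -
    obtain j k r where tt: "t = (j,k,r)" by (cases t) auto
    have "differentiable_vec n (Pr j k r) Th0" using prob_pos_diff Th0 t tt unfolding trip_def by auto
    then have "grad n (Pr j k r) Th0 $ b = 0"
      by (rule grad_zero[OF _ Th0 b]) (use inv tt in simp)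
    then show ?thesis unfolding w_def wf_def tt by simp
  qed
  have supp0: "\<forall>t\<in>T0. \<forall>b. Dth \<le> b \<longrightarrow> b < n \<longrightarrow> w t b = 0"
  proof (intro ballI allI impI)
    fix t b assume t: "t \<in> T0" and b: "Dth \<le> b" "b < n"
    have tT: "t \<in> trip {1..N} K R" using t trip_mono[OF Asub[of 0]] unfolding T0_def by auto
    have jA: "fst t \<in> A 0" using t unfolding T0_def trip_def by auto
    show "w t b = 0"
    proof (rule wzero[OF tT b(2)])
      fix s show "Pr (fst t) (fst (snd t)) (snd (snd t)) (Th0 + s \<cdot>\<^sub>v unit_vec n b)
               = Pr (fst t) (fst (snd t)) (snd (snd t)) Th0"
        unfolding Pr_def by (rule qprob_inv) (use theta_unch[OF Th0 b] jA in auto)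
    qed
  qed
  have blk: "\<forall>p\<in>{1..P}. Dth \<le> off p \<and> off p + D p \<le> n"
    unfolding off_def n_def using par_off_le par_off_bound by blast
  have bdisj: "\<forall>p\<in>{1..P}. \<forall>q\<in>{1..P}. p \<noteq> q \<longrightarrow> {off p..<off p + D p} \<inter> {off q..<off q + D q} = {}"
    unfolding off_def using blocks_disj by blast
  have suppP: "\<forall>p\<in>{1..P}. \<forall>t\<in>Tp p. \<forall>b<n. Dth \<le> b \<longrightarrow> b \<notin> {off p..<off p + D p} \<longrightarrow> w t b = 0"
  proof (intro ballI allI impI)
    fix p t b assume p: "p \<in> {1..P}" and t: "t \<in> Tp p" and b: "b < n" "Dth \<le> b"
      and nb: "b \<notin> {off p..<off p + D p}"
    have tT: "t \<in> trip {1..N} K R" using t trip_mono[OF Asub[of p]] p unfolding Tp_def by auto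
    have jA: "fst t \<in> A p" using t unfolding Tp_def trip_def by auto
    have sg: "sensor_group A P (fst t) = p" using sensor_group_eq[OF jA _ sensors_disj] p by simp
    have pe: "par_off Dth D p + D p \<le> n" using blk p unfolding off_def by blast
    show "w t b = 0"
    proof (rule wzero[OF tT b(1)])
      fix s show "Pr (fst t) (fst (snd t)) (snd (snd t)) (Th0 + s \<cdot>\<^sub>v unit_vec n b)
               = Pr (fst t) (fst (snd t)) (snd (snd t)) Th0"
        unfolding Pr_def by (rule qprob_inv) (use theta_unch[OF Th0 b(2) b(1)] tau_unch[OF Th0 pe b(1)] nb sg off_def in auto)
    qed
  qed
  have cover: "\<forall>t\<in>T-T0. \<exists>p\<in>{1..P}. t \<in> Tp p"
  proof
    fix t assume t: "t \<in> T - T0"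
    obtain j k r where tt: "t = (j,k,r)" by (cases t) auto
    have j: "j \<in> {1..N}" "j \<notin> A 0" using t tt unfolding T_def T0_def trip_def by auto
    then obtain p where p: "p \<in> {0..P}" "j \<in> A p" using sensors_cover by blast
    have p0: "p \<noteq> 0" using j(2) p(2) by (cases p) auto
    show "\<exists>p\<in>{1..P}. t \<in> Tp p" using p p0 t tt unfolding Tp_def T_def trip_def
      by (intro bexI[of _ p]) auto
  qed
  have Tsub: "\<forall>p\<in>{1..P}. Tp p \<subseteq> T \<and> Tp p \<inter> T0 = {}"
  proof
    fix p assume p: "p \<in> {1..P}"
    have "A p \<inter> A 0 = {}" using sensors_disj p by auto
    then show "Tp p \<subseteq> T \<and> Tp p \<inter> T0 = {}" using Asub[of p] p
      unfolding Tp_def T_def T0_def trip_def by auto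
  qed
  have fin: "finite T" unfolding T_def by (rule finite_trip) simp
  have sub: "T0 \<subseteq> T" unfolding T_def T0_def by (rule trip_mono[OF Asub]) simp
  interpret gg: gram_groups n Dth T T0 w P Tp off D
    by unfold_locales (use fin sub Dn supp0 JTh_nonsing JA0_nonsing FJ FJ0 cover Tsub blk bdisj suppP in auto)
  have range_iff: "mat_range (Vth p * transpose_mat (Lth p)) \<subseteq> mat_range (Vtau p * transpose_mat (Ltau p))
      \<longleftrightarrow> (\<exists>C\<in>carrier_mat Dth (D p). \<forall>t\<in>Tp p. \<forall>i<Dth.
           w t i = (\<Sum>l\<in>{0..<D p}. C $$ (i,l) * w t (off p + l)))" if p: "p \<in> {1..P}" for p
  proof -
    let ?Ls = "triples (A p) K R"
    have e1: "mat_range (Vth p * transpose_mat (Lth p)) = mat_range (transpose_mat (Phi_mat n 0 Dth Pr (A p) K R Th0))"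
      using svd_th p by (intro svd_range) auto
    have e2: "mat_range (Vtau p * transpose_mat (Ltau p)) = mat_range (transpose_mat (Phi_mat n (par_off Dth D p) (D p) Pr (A p) K R Th0))"
      using svd_tau p by (intro svd_range) auto
    have P1: "Phi_mat n 0 Dth Pr (A p) K R Th0 = mat_of_cols Dth (map (\<lambda>t. vec Dth (w t)) ?Ls)"
      unfolding Phi_eq w_def by simp
    have P2: "Phi_mat n (par_off Dth D p) (D p) Pr (A p) K R Th0
        = mat_of_cols (D p) (map (\<lambda>t. vec (D p) (\<lambda>a. w t (off p + a))) ?Ls)"
      unfolding Phi_eq w_def off_def by simp
    have sL: "set ?Ls = Tp p" unfolding Tp_def using finS Asub p by (intro set_triples) auto
    have "mat_range (Vth p * transpose_mat (Lth p)) \<subseteq> mat_range (Vtau p * transpose_mat (Ltau p))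
       \<longleftrightarrow> (\<exists>C\<in>carrier_mat Dth (D p). mat_of_cols Dth (map (\<lambda>t. vec Dth (w t)) ?Ls)
              = C * mat_of_cols (D p) (map (\<lambda>t. vec (D p) (\<lambda>a. w t (off p + a))) ?Ls))"
      unfolding e1 e2 P1 P2 by (rule range_incl) auto
    also have "\<dots> \<longleftrightarrow> (\<exists>C\<in>carrier_mat Dth (D p). \<forall>t\<in>Tp p. \<forall>i<Dth.
           w t i = (\<Sum>l\<in>{0..<D p}. C $$ (i,l) * w t (off p + l)))"
      using cols_eq[of _ Dth "D p" w ?Ls "\<lambda>t a. w t (off p + a)"] sL by auto
    finally show ?thesis .
  qed
  show ?thesis
    unfolding FJ FJ0
  proof
    show "loewner_le (lead_submat Dth (mat_inv (mat n n (\<lambda>(a,b). \<Sum>t\<in>T. w t a * w t b))))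
        (mat_inv (mat Dth Dth (\<lambda>(a,b). \<Sum>t\<in>T0. w t a * w t b)))" by (rule gg.loewner)
    show "(lead_submat Dth (mat_inv (mat n n (\<lambda>(a,b). \<Sum>t\<in>T. w t a * w t b)))
        = mat_inv (mat Dth Dth (\<lambda>(a,b). \<Sum>t\<in>T0. w t a * w t b)))
       \<longleftrightarrow> (\<forall>p\<in>{1..P}. mat_range (Vth p * transpose_mat (Lth p)) \<subseteq> mat_range (Vtau p * transpose_mat (Ltau p)))"
      using gg.eq_imp gg.imp_eq range_iff by blast
  qed
qed

end
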